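(* Let $S$ be a numerical semigroup with conductor $c$, and let $M=\{m=m_1<\cdots<m_r\}\subseteq S$ with $m\ge 2c-1$. Then $M$ is $(S,m,r)$-amenable if and only if for all $i\in\{1,\ldots,r\}$ and every minimal generator $g$ of $S$, if $m_i-g\ge m$ then $m_i-g\in M$.
   Context: A numerical semigroup is a submonoid of $\mathbb N$ with finite complement; its minimal generators are its irreducible nonzero elements (those not a sum of two nonzero elements of $S$); its conductor $c$ is the least element of $S$ such that $c+n\in S$ for all $n\in\mathbb N$. For $x\in S$, $\mathrm D(x)=\{\alpha\in S\mid x-\alpha\in S\}$. A set $M=\{m_1<\cdots<m_r\}\subseteq S$ with $2c-1\le m=m_1$ is $(S,m,r)$-amenable if $\mathrm D(m_i)\cap[m,\infty)\subseteq M$ for all $i\in\{1,\ldots,r\}$. *)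

theory Defs
  imports Main
begin

definition numerical_semigroup :: "nat set \<Rightarrow> bool" where
  "numerical_semigroup S \<longleftrightarrow> 0 \<in> S \<and> (\<forall>x\<in>S. \<forall>y\<in>S. x + y \<in> S) \<and> finite (UNIV - S)"

definition conductor :: "nat set \<Rightarrow> nat" where
  "conductor S = (LEAST c. c \<in> S \<and> (\<forall>n. c + n \<in> S))"

definition minimal_generators :: "nat set \<Rightarrow> nat set" where
  "minimal_generators S = {g \<in> S. g \<noteq> 0 \<and> \<not> (\<exists>a\<in>S. \<exists>b\<in>S. a \<noteq> 0 \<and> b \<noteq> 0 \<and> g = a + b)}"

text \<open>D(x) = {alpha in S | x - alpha in S}, with integer subtraction (so alpha <= x).\<close>
definition Dset :: "nat set \<Rightarrow> nat \<Rightarrow> nat set" where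
  "Dset S x = {\<alpha> \<in> S. \<alpha> \<le> x \<and> x - \<alpha> \<in> S}"

definition amenable :: "nat set \<Rightarrow> nat \<Rightarrow> nat \<Rightarrow> nat set \<Rightarrow> bool" where
  "amenable S m r M \<longleftrightarrow> finite M \<and> M \<noteq> {} \<and> card M = r \<and> M \<subseteq> S \<and> Min M = m
     \<and> 2 * int (conductor S) - 1 \<le> int m
     \<and> (\<forall>x\<in>M. Dset S x \<inter> {m..} \<subseteq> M)"

end

theory Submission
  imports Defs
begin

lemma cond_prop:
  assumes "numerical_semigroup S"
  shows "conductor S + n \<in> S"
proof -
  have fin: "finite (UNIV - S)" using assms unfolding numerical_semigroup_def by auto
  define c where "c = (if UNIV - S = {} then 0 else Suc (Max (UNIV - S)))"
  have "\<forall>n. c + n \<in> S"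
  proof
    fix n show "c + n \<in> S"
    proof (rule ccontr)
      assume "c + n \<notin> S"
      hence "c + n \<in> UNIV - S" by auto
      hence "c + n \<le> Max (UNIV - S)" "UNIV - S \<noteq> {}" using fin by auto
      thus False unfolding c_def by auto
    qed
  qed
  hence ex: "\<exists>c. c \<in> S \<and> (\<forall>n. c + n \<in> S)" by (metis add_0_right)
  show ?thesis using LeastI_ex[OF ex] unfolding conductor_def by blast
qed

lemma ge_cond_in:
  assumes "numerical_semigroup S" "conductor S \<le> y"
  shows "y \<in> S"
  using cond_prop[OF assms(1), of "y - conductor S"] assms(2) by simp

lemma gen_exists:
  assumes "numerical_semigroup S"
  shows "b \<in> S \<Longrightarrow> b \<noteq> 0 \<Longrightarrow> \<exists>g\<in>minimal_generators S. g \<le> b \<and> b - g \<in> S"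
proof (induction b rule: less_induct)
  case (less b)
  have z: "0 \<in> S" and add: "\<And>x y. x \<in> S \<Longrightarrow> y \<in> S \<Longrightarrow> x + y \<in> S"
    using assms unfolding numerical_semigroup_def by auto
  show ?case
  proof (cases "b \<in> minimal_generators S")
    case True thus ?thesis using z by auto
  next
    case False
    then obtain a c where ac: "a \<in> S" "c \<in> S" "a \<noteq> 0" "c \<noteq> 0" "b = a + c"
      using less.prems unfolding minimal_generators_def by auto
    then obtain g where g: "g \<in> minimal_generators S" "g \<le> a" "a - g \<in> S"
      using less.IH[of a] by auto
    have "b - g = (a - g) + c" using ac g by simp
    thus ?thesis using g ac add by (metis le_add1 order_trans)
  qed
qed

theorem proposition3p9:
  fixes S M :: "nat set" and m r :: nat
  assumes "numerical_semigroup S"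
    and "finite M" and "M \<noteq> {}" and "card M = r" and "M \<subseteq> S" and "Min M = m"
    and "2 * int (conductor S) - 1 \<le> int m"
  shows "amenable S m r M \<longleftrightarrow>
    (\<forall>x\<in>M. \<forall>g\<in>minimal_generators S. int x - int g \<ge> int m \<longrightarrow> x - g \<in> M)"
proof
  have mc: "conductor S \<le> m" using assms(7) by linarith
  assume am: "amenable S m r M"
  show "\<forall>x\<in>M. \<forall>g\<in>minimal_generators S. int x - int g \<ge> int m \<longrightarrow> x - g \<in> M"
  proof (intro ballI impI)
    fix x g assume x: "x \<in> M" and g: "g \<in> minimal_generators S" and le: "int x - int g \<ge> int m"
    have gS: "g \<in> S" using g unfolding minimal_generators_def by auto
    have xg: "x - g \<in> S" using ge_cond_in[OF assms(1)] mc le by simp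
    have "x - g \<in> Dset S x \<inter> {m..}" unfolding Dset_def using gS xg le by auto
    thus "x - g \<in> M" using am x unfolding amenable_def by blast
  qed
next
  assume H: "\<forall>x\<in>M. \<forall>g\<in>minimal_generators S. int x - int g \<ge> int m \<longrightarrow> x - g \<in> M"
  have key: "\<And>x \<alpha>. x - \<alpha> = k \<Longrightarrow> x \<in> M \<Longrightarrow> \<alpha> \<in> S \<Longrightarrow> \<alpha> \<le> x \<Longrightarrow> x - \<alpha> \<in> S \<Longrightarrow> m \<le> \<alpha> \<Longrightarrow> \<alpha> \<in> M" for k
  proof (induction k rule: less_induct)
    case (less k x \<alpha>)
    show ?case
    proof (cases "x - \<alpha> = 0")
      case True thus ?thesis using less.prems by (metis diff_is_0_eq le_antisym)
    next
      case False
      then obtain g where g: "g \<in> minimal_generators S" "g \<le> x - \<alpha>" "x - \<alpha> - g \<in> S"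
        using gen_exists[OF assms(1), of "x - \<alpha>"] less.prems by auto
      have xgM: "x - g \<in> M" using H less.prems g by force
      have "g \<noteq> 0" using g(1) unfolding minimal_generators_def by auto
      moreover have "x - g - \<alpha> < k" using g False less.prems \<open>g \<noteq> 0\<close> by linarith
      moreover have "x - g - \<alpha> = x - \<alpha> - g" "\<alpha> \<le> x - g" using g less.prems by auto
      ultimately show ?thesis using less.IH[of "x - g - \<alpha>" "x - g" \<alpha>] less.prems g xgM
        by auto
    qed
  qed
  show "amenable S m r M" unfolding amenable_def Dset_def using assms key by auto
qed

end
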